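(* For every theory $\Sigma$ and formula $A \Rightarrow B$: $\Sigma \vdash A \Rightarrow B$ if and only if there is a normalized derivation sequence of $A \Rightarrow B$ using formulas in $\Sigma$.
   Context: $Y$ is a non-empty finite set of attributes and $\mathcal{T}_Y = \{y^i \mid y \in Y, i \in \mathbb{Z}\}$; $M + j = \{y^{i+j} \mid y^i \in M\}$. A formula is $A \Rightarrow B$ with $A,B$ finite subsets of $\mathcal{T}_Y$. Deduction rules (for finite $A,B,C,D,E \subseteq \mathcal{T}_Y$, $i \in \mathbb{Z}$): (Ax) infer $A \cup B \Rightarrow A$; (Cut) from $A \Rightarrow B$ and $B \cup C \Rightarrow D$ infer $A \cup C \Rightarrow D$; (Shf) from $A \Rightarrow B$ infer $A+i \Rightarrow B+i$; also (Ref) infer $A \Rightarrow A$; (Acc) from $A \Rightarrow B \cup C$ and $C \Rightarrow D \cup E$ infer $A \Rightarrow B \cup C \cup D$; (Pro) from $A \Rightarrow B \cup C$ infer $A \Rightarrow B$. $\Sigma \vdash A \Rightarrow B$ means there is a finite sequence ending with $A \Rightarrow B$ each member of which is in $\Sigma$ or follows from earlier members by (Ax), (Cut) or (Shf). A normalized derivation sequence of $A \Rightarrow B$ using formulas in $\Sigma$ is a finite sequence of formulas which (1) starts with finitely many formulas in $\Sigma$; (2) continues by formulas obtained by (Shf) applied to formulas in part (1); (3) continues by $A \Rightarrow A$; (4) continues by formulas each obtained by (Acc) whose first hypothesis is the immediately preceding formula and whose second hypothesis is a formula from part (1) or (2); (5) terminates with $A \Rightarrow B$, obtained from the immediately preceding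 formula by (Pro). *)

theory Defs
  imports Main "HOL-Library.FSet"
begin

text \<open>Time-stamped attributes y^i are pairs (y, i); the attribute set Y is the
  (finite, nonempty) universe of the type 'a.  A formula A => B is a pair of
  finite sets (fsets) of time-stamped attributes.\<close>

type_synonym 'a tattr = "'a \<times> int"
type_synonym 'a fml = "'a tattr fset \<times> 'a tattr fset"

definition shift :: "'a tattr fset \<Rightarrow> int \<Rightarrow> 'a tattr fset" where
  "shift M j = (\<lambda>(y, i). (y, i + j)) |`| M"

definition is_Ax :: "'a fml \<Rightarrow> bool" where
  "is_Ax \<psi> \<longleftrightarrow> (\<exists>A B. \<psi> = (A |\<union>| B, A))"

definition is_Cut :: "'a fml \<Rightarrow> 'a fml \<Rightarrow> 'a fml \<Rightarrow> bool" where
  "is_Cut \<phi>1 \<phi>2 \<psi> \<longleftrightarrow>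
     (\<exists>A B C D. \<phi>1 = (A, B) \<and> \<phi>2 = (B |\<union>| C, D) \<and> \<psi> = (A |\<union>| C, D))"

definition is_Shf :: "'a fml \<Rightarrow> 'a fml \<Rightarrow> bool" where
  "is_Shf \<phi> \<psi> \<longleftrightarrow> (\<exists>A B i. \<phi> = (A, B) \<and> \<psi> = (shift A i, shift B i))"

definition is_Ref :: "'a fml \<Rightarrow> bool" where
  "is_Ref \<psi> \<longleftrightarrow> (\<exists>A. \<psi> = (A, A))"

definition is_Acc :: "'a fml \<Rightarrow> 'a fml \<Rightarrow> 'a fml \<Rightarrow> bool" where
  "is_Acc \<phi>1 \<phi>2 \<psi> \<longleftrightarrow>
     (\<exists>A B C D E. \<phi>1 = (A, B |\<union>| C) \<and> \<phi>2 = (C, D |\<union>| E)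
                 \<and> \<psi> = (A, B |\<union>| C |\<union>| D))"

definition is_Pro :: "'a fml \<Rightarrow> 'a fml \<Rightarrow> bool" where
  "is_Pro \<phi> \<psi> \<longleftrightarrow> (\<exists>A B C. \<phi> = (A, B |\<union>| C) \<and> \<psi> = (A, B))"

definition provable :: "'a fml set \<Rightarrow> 'a fml \<Rightarrow> bool" where
  "provable \<Sigma> \<phi> \<longleftrightarrow>
     (\<exists>ds. ds \<noteq> [] \<and> last ds = \<phi> \<and>
        (\<forall>k < length ds. ds ! k \<in> \<Sigma> \<or> is_Ax (ds ! k)
            \<or> (\<exists>i < k. \<exists>j < k. is_Cut (ds ! i) (ds ! j) (ds ! k))
            \<or> (\<exists>i < k. is_Shf (ds ! i) (ds ! k))))"

definition normalized_derivation :: "'a fml set \<Rightarrow> 'a fml \<Rightarrow> 'a fml list \<Rightarrow> bool" where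
  "normalized_derivation \<Sigma> \<phi> ds \<longleftrightarrow>
     (\<exists>P1 P2 P4.
        ds = P1 @ P2 @ [(fst \<phi>, fst \<phi>)] @ P4 @ [\<phi>]
      \<and> set P1 \<subseteq> \<Sigma>
      \<and> (\<forall>k < length P2. \<exists>i < length P1. is_Shf (P1 ! i) (P2 ! k))
      \<and> is_Ref (fst \<phi>, fst \<phi>)
      \<and> (\<forall>k < length P4. \<exists>\<chi> \<in> set P1 \<union> set P2.
            is_Acc (((fst \<phi>, fst \<phi>) # P4) ! k) \<chi> (P4 ! k))
      \<and> is_Pro (last ((fst \<phi>, fst \<phi>) # P4)) \<phi>)"

end

theory Submission
  imports Defs
begin

inductive der :: "'a fml set \<Rightarrow> 'a fml \<Rightarrow> bool" for \<Sigma> where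
  mem: "\<phi> \<in> \<Sigma> \<Longrightarrow> der \<Sigma> \<phi>"
| ax: "is_Ax \<phi> \<Longrightarrow> der \<Sigma> \<phi>"
| cut: "der \<Sigma> \<phi>1 \<Longrightarrow> der \<Sigma> \<phi>2 \<Longrightarrow> is_Cut \<phi>1 \<phi>2 \<psi> \<Longrightarrow> der \<Sigma> \<psi>"
| shf: "der \<Sigma> \<phi> \<Longrightarrow> is_Shf \<phi> \<psi> \<Longrightarrow> der \<Sigma> \<psi>"

definition step :: "'a fml set \<Rightarrow> 'a fml set \<Rightarrow> 'a fml \<Rightarrow> bool" where
  "step \<Sigma> S \<psi> \<longleftrightarrow> \<psi> \<in> \<Sigma> \<or> is_Ax \<psi> \<or> (\<exists>a\<in>S. \<exists>b\<in>S. is_Cut a b \<psi>) \<or> (\<exists>a\<in>S. is_Shf a \<psi>)"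

definition valid :: "'a fml set \<Rightarrow> 'a fml list \<Rightarrow> bool" where
  "valid \<Sigma> ds \<longleftrightarrow> (\<forall>k < length ds. step \<Sigma> (set (take k ds)) (ds ! k))"

lemma ex_take: "k \<le> length ds \<Longrightarrow> (\<exists>i<k. P (ds ! i)) \<longleftrightarrow> (\<exists>a\<in>set (take k ds). P a)"
proof -
  assume "k \<le> length ds"
  then have "set (take k ds) = (!) ds ` {0..<k}" by (simp add: nth_image)
  then show ?thesis by auto
qed

lemma take_img: "k \<le> length ds \<Longrightarrow> set (take k ds) = (!) ds ` {0..<k}"
  by (simp add: nth_image)

lemma provable_alt: "provable \<Sigma> \<phi> \<longleftrightarrow> (\<exists>ds. ds \<noteq> [] \<and> last ds = \<phi> \<and> valid \<Sigma> ds)"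
proof -
  have bx: "(\<exists>a\<in>{0..<k::nat}. P a) = (\<exists>a<k. P a)" for k P by auto
  have "valid \<Sigma> ds \<longleftrightarrow> (\<forall>k < length ds. ds ! k \<in> \<Sigma> \<or> is_Ax (ds ! k)
            \<or> (\<exists>i < k. \<exists>j < k. is_Cut (ds ! i) (ds ! j) (ds ! k))
            \<or> (\<exists>i < k. is_Shf (ds ! i) (ds ! k)))" for ds
    unfolding valid_def step_def
  proof (intro all_cong1 imp_cong refl)
    fix k assume "k < length ds"
    then have "set (take k ds) = (!) ds ` {0..<k}" by (simp add: take_img)
    then show "(ds ! k \<in> \<Sigma> \<or> is_Ax (ds ! k) \<or> (\<exists>a\<in>set (take k ds). \<exists>b\<in>set (take k ds). is_Cut a b (ds ! k)) \<or> (\<exists>a\<in>set (take k ds). is_Shf a (ds ! k)))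
      = (ds ! k \<in> \<Sigma> \<or> is_Ax (ds ! k)
            \<or> (\<exists>i < k. \<exists>j < k. is_Cut (ds ! i) (ds ! j) (ds ! k))
            \<or> (\<exists>i < k. is_Shf (ds ! i) (ds ! k)))"
      by (simp add: bx)
  qed
  then show ?thesis unfolding provable_def by simp
qed

lemma step_mono: "step \<Sigma> S \<psi> \<Longrightarrow> S \<subseteq> T \<Longrightarrow> step \<Sigma> T \<psi>"
  unfolding step_def by blast

lemma valid_append: "valid \<Sigma> ds1 \<Longrightarrow> valid \<Sigma> ds2 \<Longrightarrow> valid \<Sigma> (ds1 @ ds2)"
  unfolding valid_def
proof (intro allI impI)
  fix k assume v1: "\<forall>k<length ds1. step \<Sigma> (set (take k ds1)) (ds1 ! k)"
    and v2: "\<forall>k<length ds2. step \<Sigma> (set (take k ds2)) (ds2 ! k)"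
    and k: "k < length (ds1 @ ds2)"
  show "step \<Sigma> (set (take k (ds1 @ ds2))) ((ds1 @ ds2) ! k)"
  proof (cases "k < length ds1")
    case True then show ?thesis using v1 by (simp add: nth_append)
  next
    case False
    then have "step \<Sigma> (set (take (k - length ds1) ds2)) (ds2 ! (k - length ds1))"
      using v2 k by simp
    moreover have "set (take (k - length ds1) ds2) \<subseteq> set (take k (ds1 @ ds2))"
      using False by simp
    ultimately show ?thesis using False by (simp add: nth_append step_mono)
  qed
qed

lemma valid_snoc: "valid \<Sigma> ds \<Longrightarrow> step \<Sigma> (set ds) \<psi> \<Longrightarrow> valid \<Sigma> (ds @ [\<psi>])"
  unfolding valid_def by (auto simp: nth_append less_Suc_eq)

lemma valid_single: "step \<Sigma> {} \<psi> \<Longrightarrow> valid \<Sigma> [\<psi>]"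
  unfolding valid_def by auto

lemma der_imp_provable: "der \<Sigma> \<phi> \<Longrightarrow> provable \<Sigma> \<phi>"
  unfolding provable_alt
proof (induction rule: der.induct)
  case (mem \<phi>) then show ?case
    by (intro exI[of _ "[\<phi>]"]) (auto intro: valid_single simp: step_def)
next
  case (ax \<phi>) then show ?case
    by (intro exI[of _ "[\<phi>]"]) (auto intro: valid_single simp: step_def)
next
  case (cut \<phi>1 \<phi>2 \<psi>)
  then obtain ds1 ds2 where d: "ds1 \<noteq> []" "last ds1 = \<phi>1" "valid \<Sigma> ds1"
    "ds2 \<noteq> []" "last ds2 = \<phi>2" "valid \<Sigma> ds2" by blast
  have "\<phi>1 \<in> set (ds1 @ ds2)" "\<phi>2 \<in> set (ds1 @ ds2)" using d by auto
  then have "step \<Sigma> (set (ds1 @ ds2)) \<psi>" using \<open>is_Cut \<phi>1 \<phi>2 \<psi>\<close> unfolding step_def by blast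
  then have "valid \<Sigma> ((ds1 @ ds2) @ [\<psi>])" using valid_snoc valid_append d by blast
  then show ?case by (intro exI[of _ "(ds1 @ ds2) @ [\<psi>]"]) simp
next
  case (shf \<phi> \<psi>)
  then obtain ds1 where d: "ds1 \<noteq> []" "last ds1 = \<phi>" "valid \<Sigma> ds1" by blast
  have "\<phi> \<in> set ds1" using d by auto
  then have "step \<Sigma> (set ds1) \<psi>" using \<open>is_Shf \<phi> \<psi>\<close> unfolding step_def by blast
  then have "valid \<Sigma> (ds1 @ [\<psi>])" using valid_snoc d by blast
  then show ?case by (intro exI[of _ "ds1 @ [\<psi>]"]) simp
qed

lemma provable_imp_der: "provable \<Sigma> \<phi> \<Longrightarrow> der \<Sigma> \<phi>"
proof -
  assume "provable \<Sigma> \<phi>"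
  then obtain ds where d: "ds \<noteq> []" "last ds = \<phi>" and
    v: "\<forall>k < length ds. ds ! k \<in> \<Sigma> \<or> is_Ax (ds ! k)
            \<or> (\<exists>i < k. \<exists>j < k. is_Cut (ds ! i) (ds ! j) (ds ! k))
            \<or> (\<exists>i < k. is_Shf (ds ! i) (ds ! k))"
    unfolding provable_def by blast
  have "k < length ds \<Longrightarrow> der \<Sigma> (ds ! k)" for k
  proof (induction k rule: less_induct)
    case (less k)
    then show ?case using v[rule_format, OF less.prems]
      by (auto intro: der.intros)
  qed
  then have "der \<Sigma> (ds ! (length ds - 1))" using d by simp
  then show ?thesis using d by (simp add: last_conv_nth)
qed

lemma der_Pro: "der \<Sigma> \<phi> \<Longrightarrow> is_Pro \<phi> \<psi> \<Longrightarrow> der \<Sigma> \<psi>"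
proof -
  assume a: "der \<Sigma> \<phi>" "is_Pro \<phi> \<psi>"
  then obtain A B C where e: "\<phi> = (A, B |\<union>| C)" "\<psi> = (A, B)" unfolding is_Pro_def by blast
  have "der \<Sigma> (B |\<union>| C, B)" by (rule der.ax) (auto simp: is_Ax_def)
  moreover have "is_Cut (A, B |\<union>| C) (B |\<union>| C, B) (A, B)"
    unfolding is_Cut_def by (rule exI[of _ A], rule exI[of _ "B |\<union>| C"], rule exI[of _ "{||}"]) auto
  ultimately show ?thesis using a e der.cut by metis
qed

lemma der_Acc: "der \<Sigma> \<phi>1 \<Longrightarrow> der \<Sigma> \<phi>2 \<Longrightarrow> is_Acc \<phi>1 \<phi>2 \<psi> \<Longrightarrow> der \<Sigma> \<psi>"
proof -
  assume a: "der \<Sigma> \<phi>1" "der \<Sigma> \<phi>2" "is_Acc \<phi>1 \<phi>2 \<psi>"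
  then obtain A B C D E where e: "\<phi>1 = (A, B |\<union>| C)" "\<phi>2 = (C, D |\<union>| E)"
    "\<psi> = (A, B |\<union>| C |\<union>| D)" unfolding is_Acc_def by blast
  have cd: "der \<Sigma> (C, D)" using a(2) e(2) der_Pro unfolding is_Pro_def by blast
  have ax: "der \<Sigma> (D |\<union>| (B |\<union>| C), B |\<union>| C |\<union>| D)"
    by (rule der.ax) (auto simp: is_Ax_def intro!: exI[of _ "B |\<union>| C |\<union>| D"])
  have "is_Cut (C, D) (D |\<union>| (B |\<union>| C), B |\<union>| C |\<union>| D) (B |\<union>| C, B |\<union>| C |\<union>| D)"
    unfolding is_Cut_def by auto
  then have x: "der \<Sigma> (B |\<union>| C, B |\<union>| C |\<union>| D)" using cd ax der.cut by blast
  have "is_Cut (A, B |\<union>| C) ((B |\<union>| C) |\<union>| {||}, B |\<union>| C |\<union>| D) (A, B |\<union>| C |\<union>| D)"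
    unfolding is_Cut_def by (rule exI[of _ A], rule exI[of _ "B |\<union>| C"], rule exI[of _ "{||}"]) auto
  then show ?thesis using x a(1) e der.cut by (metis funion_fempty_right)
qed

lemma shift_union: "shift (X |\<union>| Y) i = shift X i |\<union>| shift Y i"
  unfolding shift_def by auto

lemma shift_shift: "shift (shift X j) i = shift X (j + i)"
  unfolding shift_def by (auto simp: fimage_fimage case_prod_beta add.assoc intro!: fimage_cong)

lemma shift_mono: "X |\<subseteq>| Y \<Longrightarrow> shift X i |\<subseteq>| shift Y i"
  unfolding shift_def by (rule fimage_mono)

definition G :: "'a fml set \<Rightarrow> 'a fml set" where
  "G \<Sigma> = {(shift P i, shift Q i) | P Q i. (P, Q) \<in> \<Sigma>}"

inductive reach :: "'a fml set \<Rightarrow> 'a tattr fset \<Rightarrow> 'a tattr fset \<Rightarrow> bool" for S A where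
  base: "reach S A A"
| more: "reach S A X \<Longrightarrow> \<chi> \<in> S \<Longrightarrow> fst \<chi> |\<subseteq>| X \<Longrightarrow> reach S A (X |\<union>| snd \<chi>)"

lemma der_reach: "der \<Sigma> \<phi> \<Longrightarrow> \<forall>i X. reach (G \<Sigma>) A X \<longrightarrow> shift (fst \<phi>) i |\<subseteq>| X \<longrightarrow>
   (\<exists>Y. reach (G \<Sigma>) A Y \<and> X |\<union>| shift (snd \<phi>) i |\<subseteq>| Y)"
proof (induction rule: der.induct)
  case (mem \<phi>)
  show ?case
  proof (intro allI impI)
    fix i X assume r: "reach (G \<Sigma>) A X" and s: "shift (fst \<phi>) i |\<subseteq>| X"
    have g: "(shift (fst \<phi>) i, shift (snd \<phi>) i) \<in> G \<Sigma>" using mem unfolding G_def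
      by (cases \<phi>) auto
    have "reach (G \<Sigma>) A (X |\<union>| snd (shift (fst \<phi>) i, shift (snd \<phi>) i))"
      by (rule reach.more[OF r g]) (simp add: s)
    then show "\<exists>Y. reach (G \<Sigma>) A Y \<and> X |\<union>| shift (snd \<phi>) i |\<subseteq>| Y"
      by (intro exI[of _ "X |\<union>| shift (snd \<phi>) i"]) simp
  qed
next
  case (ax \<phi>)
  then obtain P Q where e: "\<phi> = (P |\<union>| Q, P)" unfolding is_Ax_def by blast
  show ?case
  proof (intro allI impI)
    fix i X assume r: "reach (G \<Sigma>) A X" and s: "shift (fst \<phi>) i |\<subseteq>| X"
    then have "X |\<union>| shift (snd \<phi>) i |\<subseteq>| X" using e by (simp add: shift_union)
    then show "\<exists>Y. reach (G \<Sigma>) A Y \<and> X |\<union>| shift (snd \<phi>) i |\<subseteq>| Y"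
      using r by blast
  qed
next
  case (cut \<phi>1 \<phi>2 \<psi>)
  then obtain A1 B C D where e: "\<phi>1 = (A1, B)" "\<phi>2 = (B |\<union>| C, D)" "\<psi> = (A1 |\<union>| C, D)"
    unfolding is_Cut_def by blast
  show ?case
  proof (intro allI impI)
    fix i X assume r: "reach (G \<Sigma>) A X" and s: "shift (fst \<psi>) i |\<subseteq>| X"
    then have s1: "shift A1 i |\<subseteq>| X" and s2: "shift C i |\<subseteq>| X" using e by (simp_all add: shift_union)
    obtain Y1 where y1: "reach (G \<Sigma>) A Y1" "X |\<union>| shift B i |\<subseteq>| Y1"
      using cut.IH(1)[rule_format, of X i] r s1 e by auto
    have "shift (B |\<union>| C) i |\<subseteq>| Y1" using y1 s2 by (auto simp: shift_union)
    then obtain Y2 where y2: "reach (G \<Sigma>) A Y2" "Y1 |\<union>| shift D i |\<subseteq>| Y2"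
      using cut.IH(2)[rule_format, of Y1 i] y1 e by auto
    have "X |\<union>| shift (snd \<psi>) i |\<subseteq>| Y2" using y1 y2 e by auto
    then show "\<exists>Y. reach (G \<Sigma>) A Y \<and> X |\<union>| shift (snd \<psi>) i |\<subseteq>| Y"
      using y2 by blast
  qed
next
  case (shf \<phi> \<psi>)
  then obtain P Q j where e: "\<phi> = (P, Q)" "\<psi> = (shift P j, shift Q j)"
    unfolding is_Shf_def by blast
  show ?case
  proof (intro allI impI)
    fix i X assume r: "reach (G \<Sigma>) A X" and s: "shift (fst \<psi>) i |\<subseteq>| X"
    then have "shift P (j + i) |\<subseteq>| X" using e by (simp add: shift_shift)
    then obtain Y where "reach (G \<Sigma>) A Y" "X |\<union>| shift Q (j + i) |\<subseteq>| Y"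
      using shf.IH[rule_format, of X "j + i"] r e by auto
    then show "\<exists>Y. reach (G \<Sigma>) A Y \<and> X |\<union>| shift (snd \<psi>) i |\<subseteq>| Y"
      using e by (auto simp add: shift_shift)
  qed
qed

lemma shift0: "shift X 0 = X"
  unfolding shift_def by (simp add: case_prod_beta fset.map_ident_strong)

lemma reach_chain: "reach (G \<Sigma>) A Y \<Longrightarrow> \<exists>P1 P2 P4. set P1 \<subseteq> \<Sigma>
   \<and> (\<forall>k < length P2. \<exists>i < length P1. is_Shf (P1 ! i) (P2 ! k))
   \<and> (\<forall>k < length P4. \<exists>\<chi> \<in> set P1 \<union> set P2. is_Acc (((A, A) # P4) ! k) \<chi> (P4 ! k))
   \<and> last ((A, A) # P4) = (A, Y)"
proof (induction rule: reach.induct)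
  case base
  show ?case by (rule exI[of _ "[]"])+ simp
next
  case (more X \<chi>)
  then obtain P1 P2 P4 where h: "set P1 \<subseteq> \<Sigma>"
   "\<forall>k < length P2. \<exists>i < length P1. is_Shf (P1 ! i) (P2 ! k)"
   "\<forall>k < length P4. \<exists>\<chi> \<in> set P1 \<union> set P2. is_Acc (((A, A) # P4) ! k) \<chi> (P4 ! k)"
   "last ((A, A) # P4) = (A, X)" by blast
  obtain P Q i where c: "\<chi> = (shift P i, shift Q i)" "(P, Q) \<in> \<Sigma>" using more(2) unfolding G_def by blast
  let ?P1 = "P1 @ [(P, Q)]" and ?P2 = "P2 @ [\<chi>]" and ?P4 = "P4 @ [(A, X |\<union>| snd \<chi>)]"
  have 1: "set ?P1 \<subseteq> \<Sigma>" using h c by auto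
  have 2: "\<forall>k < length ?P2. \<exists>i < length ?P1. is_Shf (?P1 ! i) (?P2 ! k)"
  proof (intro allI impI)
    fix k assume k: "k < length ?P2"
    show "\<exists>i < length ?P1. is_Shf (?P1 ! i) (?P2 ! k)"
    proof (cases "k < length P2")
      case True
      then obtain j where "j < length P1" "is_Shf (P1 ! j) (P2 ! k)" using h(2) by blast
      then show ?thesis using True by (intro exI[of _ j]) (simp add: nth_append)
    next
      case False
      then have "k = length P2" using k by simp
      then show ?thesis using c
        by (intro exI[of _ "length P1"]) (auto simp: nth_append is_Shf_def)
    qed
  qed
  have lastX: "((A, A) # P4) ! length P4 = (A, X)" using h(4) by (cases P4 rule: rev_cases) (auto simp: nth_append)
  have acc: "is_Acc (A, X) \<chi> (A, X |\<union>| snd \<chi>)"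
    unfolding is_Acc_def using more(3)
    by (intro exI[of _ A] exI[of _ X] exI[of _ "fst \<chi>"] exI[of _ "snd \<chi>"] exI[of _ "{||}"])
       (auto simp: funion_absorb2)
  have 3: "\<forall>k < length ?P4. \<exists>\<chi>' \<in> set ?P1 \<union> set ?P2. is_Acc (((A, A) # ?P4) ! k) \<chi>' (?P4 ! k)"
  proof (intro allI impI)
    fix k assume k: "k < length ?P4"
    show "\<exists>\<chi>' \<in> set ?P1 \<union> set ?P2. is_Acc (((A, A) # ?P4) ! k) \<chi>' (?P4 ! k)"
    proof (cases "k < length P4")
      case True
      then obtain \<chi>' where "\<chi>' \<in> set P1 \<union> set P2" "is_Acc (((A, A) # P4) ! k) \<chi>' (P4 ! k)"
        using h(3) by blast
      moreover have "((A, A) # ?P4) ! k = ((A, A) # P4) ! k"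
        using True by (simp add: nth_append nth_Cons split: nat.split)
      ultimately show ?thesis using True by (intro bexI[of _ \<chi>']) (auto simp: nth_append)
    next
      case False
      then have kk: "k = length P4" using k by simp
      have "((A, A) # ?P4) ! k = (((A, A) # P4) @ [(A, X |\<union>| snd \<chi>)]) ! k" by simp
      also have "\<dots> = ((A, A) # P4) ! k" using kk by (intro nth_append_left) simp
      finally have "((A, A) # ?P4) ! k = (A, X)" using lastX kk by simp
      then show ?thesis using acc kk by (intro bexI[of _ \<chi>]) (auto simp: nth_append)
    qed
  qed
  have 4: "last ((A, A) # ?P4) = (A, X |\<union>| snd \<chi>)" by simp
  show ?case using 1 2 3 4 by blast
qed

theorem theorem10:
  fixes \<Sigma> :: "('a::finite) fml set" and A B :: "'a tattr fset"
  shows "provable \<Sigma> (A, B) \<longleftrightarrow> (\<exists>ds. normalized_derivation \<Sigma> (A, B) ds)"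
proof
  assume "provable \<Sigma> (A, B)"
  then have "der \<Sigma> (A, B)" by (rule provable_imp_der)
  from der_reach[where A=A, OF this, rule_format, of A 0]
  obtain Y where y: "reach (G \<Sigma>) A Y" "A |\<union>| B |\<subseteq>| Y"
    by (auto simp: shift0 intro: reach.base)
  from reach_chain[OF y(1)] obtain P1 P2 P4 where h: "set P1 \<subseteq> \<Sigma>"
   "\<forall>k < length P2. \<exists>i < length P1. is_Shf (P1 ! i) (P2 ! k)"
   "\<forall>k < length P4. \<exists>\<chi> \<in> set P1 \<union> set P2. is_Acc (((A, A) # P4) ! k) \<chi> (P4 ! k)"
   "last ((A, A) # P4) = (A, Y)" by blast
  have "is_Pro (A, Y) (A, B)" unfolding is_Pro_def using y(2)
    by (intro exI[of _ A] exI[of _ B] exI[of _ Y]) (auto simp: funion_absorb2)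
  then have pro: "is_Pro (last ((A, A) # P4)) (A, B)" using h(4) by simp
  have "normalized_derivation \<Sigma> (A, B) (P1 @ P2 @ [(A, A)] @ P4 @ [(A, B)])"
    unfolding normalized_derivation_def fst_conv
    apply (rule exI[of _ P1], rule exI[of _ P2], rule exI[of _ P4])
    using h pro by (auto simp: is_Ref_def)
  then show "\<exists>ds. normalized_derivation \<Sigma> (A, B) ds" by blast
next
  assume "\<exists>ds. normalized_derivation \<Sigma> (A, B) ds"
  then obtain P1 P2 P4 where h: "set P1 \<subseteq> \<Sigma>"
   "\<forall>k < length P2. \<exists>i < length P1. is_Shf (P1 ! i) (P2 ! k)"
   "\<forall>k < length P4. \<exists>\<chi> \<in> set P1 \<union> set P2. is_Acc (((A, A) # P4) ! k) \<chi> (P4 ! k)"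
   "is_Pro (last ((A, A) # P4)) (A, B)"
    unfolding normalized_derivation_def by auto
  have d1: "\<chi> \<in> set P1 \<Longrightarrow> der \<Sigma> \<chi>" for \<chi> using h(1) by (auto intro: der.mem)
  have d2: "\<chi> \<in> set P2 \<Longrightarrow> der \<Sigma> \<chi>" for \<chi>
  proof -
    assume "\<chi> \<in> set P2"
    then obtain k where "k < length P2" "\<chi> = P2 ! k" by (auto simp: in_set_conv_nth)
    then obtain i where "i < length P1" "is_Shf (P1 ! i) \<chi>" using h(2) by blast
    then show ?thesis using d1 der.shf by (metis nth_mem)
  qed
  have "k \<le> length P4 \<Longrightarrow> der \<Sigma> (((A, A) # P4) ! k)" for k
  proof (induction k)
    case 0
    show ?case by (simp, rule der.ax) (auto simp: is_Ax_def intro!: exI[of _ A])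
  next
    case (Suc k)
    then obtain \<chi> where "\<chi> \<in> set P1 \<union> set P2" "is_Acc (((A, A) # P4) ! k) \<chi> (P4 ! k)"
      using h(3) Suc.prems by (meson Suc_le_lessD)
    moreover have "der \<Sigma> (((A, A) # P4) ! k)" using Suc by simp
    ultimately show ?case using d1 d2 der_Acc by (metis UnE nth_Cons_Suc)
  qed
  moreover have "((A, A) # P4) ! length P4 = last ((A, A) # P4)"
    by (cases P4 rule: rev_cases) (auto simp: nth_append)
  ultimately have "der \<Sigma> (last ((A, A) # P4))" by (metis order_refl)
  then have "der \<Sigma> (A, B)" using h(4) der_Pro by blast
  then show "provable \<Sigma> (A, B)" by (rule der_imp_provable)
qed

end
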